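(* Let $(X,d)$ be a compact metric space, $f\colon X\to X$ a continuous map, and $S\subset X$ a compact subset with $f(S)\subset S$ and $CR(f|_S)=S$. If $f$ has the limit shadowing property around $S$, then $f$ has the shadowing property around $S$.
   Context: For $S\subset X$: $f$ has the shadowing property around $S$ if for every $\epsilon>0$ there is $\delta>0$ such that every $\delta$-pseudo orbit of $f$ (a sequence $(x_i)_{i\ge0}$ with $d(f(x_i),x_{i+1})\le\delta$ for all $i$) contained in $S$ is $\epsilon$-shadowed by some point $x\in X$ (i.e. $d(x_i,f^i(x))\le\epsilon$ for all $i$); $f$ has the limit shadowing property around $S$ if every limit pseudo orbit (sequence with $\lim_i d(f(x_i),x_{i+1})=0$) contained in $S$ admits $y\in X$ with $\lim_i d(x_i,f^i(y))=0$. $CR(g)$ denotes the set of chain recurrent points of $g$: $x$ such that for every $\delta>0$ there is a finite sequence $x=x_0,x_1,\dots,x_k=x$ ($k\ge1$) with $d(g(x_i),x_{i+1})\le\delta$ for $0\le i<k$. *)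

theory Defs
  imports "HOL-Analysis.Analysis"
begin

definition pseudo_orbit :: "('a::metric_space \<Rightarrow> 'a) \<Rightarrow> real \<Rightarrow> (nat \<Rightarrow> 'a) \<Rightarrow> bool" where
  "pseudo_orbit f \<delta> xs \<longleftrightarrow> (\<forall>i. dist (f (xs i)) (xs (Suc i)) \<le> \<delta>)"

definition limit_pseudo_orbit :: "('a::metric_space \<Rightarrow> 'a) \<Rightarrow> (nat \<Rightarrow> 'a) \<Rightarrow> bool" where
  "limit_pseudo_orbit f xs \<longleftrightarrow> (\<lambda>i. dist (f (xs i)) (xs (Suc i))) \<longlonglongrightarrow> 0"

definition shadowing_around :: "'a::metric_space set \<Rightarrow> ('a \<Rightarrow> 'a) \<Rightarrow> 'a set \<Rightarrow> bool" where
  "shadowing_around X f S \<longleftrightarrow>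
     (\<forall>\<epsilon>>0. \<exists>\<delta>>0. \<forall>xs. pseudo_orbit f \<delta> xs \<and> range xs \<subseteq> S \<longrightarrow>
        (\<exists>x\<in>X. \<forall>i. dist (xs i) ((f ^^ i) x) \<le> \<epsilon>))"

definition limit_shadowing_around :: "'a::metric_space set \<Rightarrow> ('a \<Rightarrow> 'a) \<Rightarrow> 'a set \<Rightarrow> bool" where
  "limit_shadowing_around X f S \<longleftrightarrow>
     (\<forall>xs. limit_pseudo_orbit f xs \<and> range xs \<subseteq> S \<longrightarrow>
        (\<exists>y\<in>X. (\<lambda>i. dist (xs i) ((f ^^ i) y)) \<longlonglongrightarrow> 0))"

definition chain_recurrent_set :: "'a::metric_space set \<Rightarrow> ('a \<Rightarrow> 'a) \<Rightarrow> 'a set" where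
  "chain_recurrent_set A g = {x \<in> A. \<forall>\<delta>>0. \<exists>k\<ge>1. \<exists>c::nat \<Rightarrow> 'a.
      (\<forall>i\<le>k. c i \<in> A) \<and> c 0 = x \<and> c k = x \<and> (\<forall>i<k. dist (g (c i)) (c (Suc i)) \<le> \<delta>)}"

end

theory Submission
  imports Defs
begin

definition reach :: "'a::metric_space set \<Rightarrow> ('a \<Rightarrow> 'a) \<Rightarrow> real \<Rightarrow> 'a \<Rightarrow> 'a \<Rightarrow> bool" where
  "reach S f \<delta> x y \<longleftrightarrow> (\<exists>k\<ge>1. \<exists>c::nat \<Rightarrow> 'a.
      (\<forall>i\<le>k. c i \<in> S) \<and> c 0 = x \<and> c k = y \<and> (\<forall>i<k. dist (f (c i)) (c (Suc i)) \<le> \<delta>))"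

lemma reach_in: "reach S f \<delta> x y \<Longrightarrow> x \<in> S \<and> y \<in> S"
  unfolding reach_def by (metis le0 order_refl)

lemma reach_snoc:
  assumes "reach S f \<delta> a b" "w \<in> S" "dist (f b) w \<le> \<delta>"
  shows "reach S f \<delta> a w"
proof -
  obtain k c where k: "k \<ge> 1" "\<forall>i\<le>k. c i \<in> S" "c 0 = a" "c k = b"
    "\<forall>i<k. dist (f (c i)) (c (Suc i)) \<le> \<delta>"
    using assms(1) unfolding reach_def by blast
  define c' where "c' = c(Suc k := w)"
  have "\<forall>i\<le>Suc k. c' i \<in> S" using k assms(2) by (auto simp: c'_def le_Suc_eq)
  moreover have "c' 0 = a" "c' (Suc k) = w" using k by (auto simp: c'_def)
  moreover have "\<forall>i<Suc k. dist (f (c' i)) (c' (Suc i)) \<le> \<delta>"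
  proof (intro allI impI)
    fix i assume "i < Suc k"
    then consider "i < k" | "i = k" by linarith
    then show "dist (f (c' i)) (c' (Suc i)) \<le> \<delta>"
      by cases (use k assms in \<open>auto simp: c'_def\<close>)
  qed
  ultimately show ?thesis unfolding reach_def
    by (intro exI[of _ "Suc k"] conjI exI[of _ c']) auto
qed

lemma sym_reach:
  assumes "compact S" "continuous_on S f" "\<forall>x\<in>S. \<forall>\<delta>>0. reach S f \<delta> x x" "\<delta> > 0"
  shows "\<exists>\<eta>>0. \<eta> \<le> \<delta> \<and> (\<forall>x y. reach S f \<eta> x y \<longrightarrow> reach S f \<delta> y x)"
proof -
  have "uniformly_continuous_on S f"
    using assms(2,1) by (rule compact_uniformly_continuous)
  then obtain d where d: "d > 0" "\<forall>u\<in>S. \<forall>v\<in>S. dist v u < d \<longrightarrow> dist (f v) (f u) < \<delta>/2"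
    unfolding uniformly_continuous_on_def using assms(4) by (metis half_gt_zero)
  define \<eta> where "\<eta> = min (\<delta>/2) (d/3)"
  have \<eta>: "\<eta> > 0" "\<eta> \<le> \<delta>/2" "2*\<eta> < d" using d assms(4) by (auto simp: \<eta>_def)
  have main: "reach S f \<delta> y x" if r: "reach S f \<eta> x y" for x y
  proof -
    obtain k c where k: "k \<ge> 1" "\<forall>i\<le>k. c i \<in> S" "c 0 = x" "c k = y"
      "\<forall>i<k. dist (f (c i)) (c (Suc i)) \<le> \<eta>"
      using r unfolding reach_def by blast
    define K where "K = {z. reach S f \<delta> y z}"
    have step: "w' \<in> K" if "k0 \<in> K" "w \<in> S" "dist w k0 \<le> 2*\<eta>" "w' \<in> S" "dist w' (f w) \<le> \<eta>"
      for k0 w w'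
    proof -
      have rk: "reach S f \<delta> y k0" using that(1) by (simp add: K_def)
      have "k0 \<in> S" using reach_in[OF rk] by simp
      have "dist (f w) (f k0) < \<delta>/2" using d(2) that(2,3) \<open>k0 \<in> S\<close> \<eta>(3) by auto
      have "dist (f k0) w' \<le> dist w' (f w) + dist (f w) (f k0)"
        by (metis dist_commute dist_triangle)
      also have "\<dots> \<le> \<delta>" using \<open>dist (f w) (f k0) < \<delta>/2\<close> that(5) \<eta>(2) by linarith
      finally show ?thesis using reach_snoc[OF rk that(4)] by (simp add: K_def)
    qed
    have backw: "c i \<in> K" if "i < k" "c (Suc i) \<in> K" for i
    proof -
      have "c i \<in> S" using k(2) that(1) by simp
      then obtain m e where m: "m \<ge> 1" "\<forall>j\<le>m. e j \<in> S" "e 0 = c i" "e m = c i"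
        "\<forall>j<m. dist (f (e j)) (e (Suc j)) \<le> \<eta>"
        using assms(3) \<eta>(1) unfolding reach_def by blast
      define Q where "Q j \<longleftrightarrow> (\<exists>\<kappa>\<in>K. dist (e j) \<kappa> \<le> 2*\<eta>)" for j
      have Q1: "Q 1"
      proof -
        have "dist (e 1) (c (Suc i)) \<le> dist (e 1) (f (c i)) + dist (f (c i)) (c (Suc i))"
          by (rule dist_triangle)
        also have "\<dots> \<le> 2*\<eta>" using m(5)[rule_format, of 0] m(1,3) k(5)[rule_format, OF that(1)]
          by (simp add: dist_commute)
        finally show ?thesis using that(2) unfolding Q_def by blast
      qed
      have Qall: "1 \<le> j \<longrightarrow> j \<le> m \<longrightarrow> Q j" for j
      proof (induction j)
        case 0 then show ?case by simp
      next
        case (Suc j)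
        show ?case
        proof (intro impI)
          assume "1 \<le> Suc j" "Suc j \<le> m"
          show "Q (Suc j)"
          proof (cases "j = 0")
            case True then show ?thesis using Q1 by simp
          next
            case False
            then have "Q j" using Suc.IH \<open>Suc j \<le> m\<close> by simp
            then obtain \<kappa> where "\<kappa> \<in> K" "dist (e j) \<kappa> \<le> 2*\<eta>" unfolding Q_def by blast
            then have "e (Suc j) \<in> K"
              using step[of \<kappa> "e j" "e (Suc j)"] m(2,5) \<open>Suc j \<le> m\<close> by (simp add: dist_commute)
            then show ?thesis unfolding Q_def using \<eta>(1) by force
          qed
        qed
      qed
      have "Q (m - 1)"
      proof (cases "m = 1")
        case True then show ?thesis using Q1 m(3,4) by (simp add: Q_def)
      next
        case False then show ?thesis using Qall[of "m-1"] m(1) by simp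
      qed
      then obtain \<kappa> where "\<kappa> \<in> K" "dist (e (m-1)) \<kappa> \<le> 2*\<eta>" unfolding Q_def by blast
      moreover have "dist (f (e (m-1))) (e m) \<le> \<eta>" using m(5)[rule_format, of "m-1"] m(1) by simp
      moreover have "e (m-1) \<in> S" "e m \<in> S" using m(2) by auto
      ultimately have "e m \<in> K"
        using step[of \<kappa> "e (m-1)" "e m"] by (simp add: dist_commute)
      then show ?thesis using m(4) by simp
    qed
    have "y \<in> S" using k(2,4) by (metis order_refl)
    then have "y \<in> K" using assms(3) assms(4) unfolding K_def by simp
    have "c j \<in> K" if "j \<le> k" for j
      using that
    proof (induction rule: inc_induct)
      case base then show ?case using \<open>y \<in> K\<close> k(4) by simp
    next
      case (step n) then show ?case using backw by simp
    qed
    then show ?thesis using k(3) unfolding K_def by (metis le0 mem_Collect_eq)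
  qed
  show ?thesis using \<eta> main by (intro exI[of _ \<eta>]) auto
qed


lemma funpow_cont:
  assumes "continuous_on X f" "f ` X \<subseteq> X"
  shows "continuous_on X (f ^^ i) \<and> (f ^^ i) ` X \<subseteq> X"
proof (induction i)
  case 0 then show ?case by (simp add: continuous_on_id)
next
  case (Suc i)
  then have "continuous_on X (f \<circ> (f ^^ i))"
    using continuous_on_compose continuous_on_subset assms(1) by blast
  moreover have "(f \<circ> (f ^^ i)) ` X \<subseteq> X" using Suc assms(2) by (auto simp: image_subset_iff)
  ultimately show ?case by simp
qed

lemma finite_bad:
  fixes X :: "'a::metric_space set"
  assumes "compact X" "continuous_on X f" "f ` X \<subseteq> X"
    and bad: "\<forall>x\<in>X. \<exists>i. dist (\<xi> i) ((f ^^ i) x) > \<epsilon>"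
  shows "\<exists>N. \<forall>x\<in>X. \<exists>i<N. dist (\<xi> i) ((f ^^ i) x) > \<epsilon>"
proof (rule ccontr)
  assume "\<not> ?thesis"
  then have "\<forall>N. \<exists>x\<in>X. \<forall>i<N. dist (\<xi> i) ((f ^^ i) x) \<le> \<epsilon>"
    by (meson not_less)
  then obtain x where x: "\<And>N. x N \<in> X" "\<And>N i. i < N \<Longrightarrow> dist (\<xi> i) ((f ^^ i) (x N)) \<le> \<epsilon>"
    by metis
  obtain l r where lr: "l \<in> X" "strict_mono r" "(x \<circ> r) \<longlonglongrightarrow> l"
    using seq_compactE[OF compact_imp_seq_compact[OF assms(1)], of x] x(1) by blast
  obtain i where i: "dist (\<xi> i) ((f ^^ i) l) > \<epsilon>" using bad lr(1) by blast
  have "(\<lambda>n. (f ^^ i) ((x \<circ> r) n)) \<longlonglongrightarrow> (f ^^ i) l"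
    by (rule continuous_on_tendsto_compose[OF funpow_cont[OF assms(2,3), THEN conjunct1] lr(3) lr(1)])
       (simp add: x(1))
  then have lim: "(\<lambda>n. dist (\<xi> i) ((f ^^ i) ((x \<circ> r) n))) \<longlonglongrightarrow> dist (\<xi> i) ((f ^^ i) l)"
    by (intro tendsto_intros)
  have "\<forall>n\<ge>Suc i. dist (\<xi> i) ((f ^^ i) ((x \<circ> r) n)) \<le> \<epsilon>"
  proof (intro allI impI)
    fix n assume "Suc i \<le> n"
    then have "i < r n" using seq_suble[OF lr(2), of n] by linarith
    then show "dist (\<xi> i) ((f ^^ i) ((x \<circ> r) n)) \<le> \<epsilon>" using x(2) by simp
  qed
  then have "dist (\<xi> i) ((f ^^ i) l) \<le> \<epsilon>"
    using LIMSEQ_le_const2[OF lim] by blast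
  then show False using i by simp
qed

lemma concat_blocks:
  fixes g :: "nat \<Rightarrow> nat \<Rightarrow> 'a::metric_space" and len :: "nat \<Rightarrow> nat" and e :: "nat \<Rightarrow> real"
  assumes l1: "\<forall>n. len n \<ge> 1" and e0: "e \<longlonglongrightarrow> 0"
    and jump: "\<forall>n j. j < len n \<longrightarrow>
       dist (f (g n j)) (if Suc j < len n then g n (Suc j) else g (Suc n) 0) \<le> e n"
    and inS: "\<forall>n j. j < len n \<longrightarrow> g n j \<in> S"
  shows "\<exists>Z. range Z \<subseteq> S \<and> limit_pseudo_orbit f Z \<and>
            (\<forall>T0. \<exists>n t. T0 \<le> t \<and> (\<forall>j<len n. Z (t + j) = g n j))"
proof -
  define T where "T n = (\<Sum>m<n. len m)" for n
  have TS: "T (Suc n) = T n + len n" for n by (simp add: T_def)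
  have Tge: "n \<le> T n" for n
    by (induction n) (use l1 TS in \<open>auto\<close>, metis TS Suc_le_mono add_le_mono l1 plus_1_eq_Suc add.commute)
  have Tmono: "T a \<le> T b" if "a \<le> b" for a b
    unfolding T_def by (rule sum_mono2) (use that in auto)
  define blk where "blk t = (LEAST n. t < T (Suc n))" for t
  have blk1: "t < T (Suc (blk t))" for t
    unfolding blk_def by (rule LeastI[of _ t]) (use Tge[of "Suc t"] in simp)
  have blk2: "T (blk t) \<le> t" for t
  proof (cases "blk t")
    case 0 then show ?thesis by (simp add: T_def)
  next
    case (Suc k)
    then have "k < blk t" by simp
    then have "\<not> t < T (Suc k)" unfolding blk_def by (rule not_less_Least)
    then show ?thesis using Suc by simp
  qed
  have blk3: "blk (T n + j) = n" if "j < len n" for n j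
  proof -
    have "blk (T n + j) \<le> n" unfolding blk_def by (rule Least_le) (use that TS in simp)
    moreover have "\<not> blk (T n + j) < n"
    proof
      assume "blk (T n + j) < n"
      then have "T (Suc (blk (T n + j))) \<le> T n" by (intro Tmono) simp
      then show False using blk1[of "T n + j"] by simp
    qed
    ultimately show ?thesis by simp
  qed
  define Z where "Z t = g (blk t) (t - T (blk t))" for t
  have Zg: "Z (T n + j) = g n j" if "j < len n" for n j
    using blk3[OF that] by (simp add: Z_def)
  have tdecomp: "t = T (blk t) + (t - T (blk t)) \<and> t - T (blk t) < len (blk t)" for t
    using blk1[of t] blk2[of t] TS[of "blk t"] by simp
  have range: "range Z \<subseteq> S"
  proof
    fix z assume "z \<in> range Z"
    then obtain t where "z = Z t" by blast
    then show "z \<in> S" using inS tdecomp[of t] by (simp add: Z_def)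
  qed
  have bnd: "dist (f (Z t)) (Z (Suc t)) \<le> e (blk t)" for t
  proof -
    define n where "n = blk t"
    define j where "j = t - T n"
    have tj: "t = T n + j" "j < len n" using tdecomp[of t] by (simp_all add: n_def j_def)
    have Zt: "Z t = g n j" using Zg[OF tj(2)] tj(1) by simp
    show ?thesis
    proof (cases "Suc j < len n")
      case True
      then have "Z (Suc t) = g n (Suc j)" using Zg[OF True] tj(1) by simp
      then show ?thesis using jump[rule_format, OF tj(2)] True Zt by (simp add: n_def[symmetric])
    next
      case False
      then have "Suc t = T (Suc n) + 0" using tj TS by simp
      then have "Z (Suc t) = g (Suc n) 0" using Zg[of 0 "Suc n"] l1 by (metis One_nat_def less_eq_Suc_le)
      then show ?thesis using jump[rule_format, OF tj(2)] False Zt by (simp add: n_def[symmetric])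
    qed
  qed
  have blklim: "filterlim blk sequentially sequentially"
    unfolding filterlim_at_top
  proof (intro allI)
    fix M
    show "eventually (\<lambda>t. M \<le> blk t) sequentially"
      unfolding eventually_sequentially
    proof (intro exI[of _ "T M"] allI impI)
      fix t assume "T M \<le> t"
      show "M \<le> blk t"
      proof (rule ccontr)
        assume "\<not> M \<le> blk t"
        then have "T (Suc (blk t)) \<le> T M" by (intro Tmono) simp
        then show False using blk1[of t] \<open>T M \<le> t\<close> by simp
      qed
    qed
  qed
  have "(\<lambda>t. e (blk t)) \<longlonglongrightarrow> 0" by (rule filterlim_compose[OF e0 blklim])
  have ev1: "\<forall>\<^sub>F t in sequentially. (0::real) \<le> dist (f (Z t)) (Z (Suc t))" by simp
  have ev2: "\<forall>\<^sub>F t in sequentially. dist (f (Z t)) (Z (Suc t)) \<le> e (blk t)" by (simp add: bnd)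
  have "(\<lambda>t. dist (f (Z t)) (Z (Suc t))) \<longlonglongrightarrow> 0"
    by (rule tendsto_sandwich[OF ev1 ev2 tendsto_const \<open>(\<lambda>t. e (blk t)) \<longlonglongrightarrow> 0\<close>])
  then have lpo: "limit_pseudo_orbit f Z" by (simp add: limit_pseudo_orbit_def)
  have "\<forall>T0. \<exists>n t. T0 \<le> t \<and> (\<forall>j<len n. Z (t + j) = g n j)"
    using Zg Tge by blast
  then show ?thesis using range lpo by blast
qed

lemma choose_chains:
  assumes "\<And>n. reach S f (\<delta> n) (x n) (y n)"
  obtains m c where "\<And>n. m n \<ge> 1" "\<And>n i. i \<le> m n \<Longrightarrow> c n i \<in> S"
    "\<And>n. c n 0 = x n" "\<And>n. c n (m n) = y n"
    "\<And>n i. i < m n \<Longrightarrow> dist (f (c n i)) (c n (Suc i)) \<le> \<delta> n"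
  using assms unfolding reach_def by metis

lemma negshadow:
  "\<not> (\<forall>\<epsilon>>(0::real). \<exists>\<delta>>(0::real). \<forall>xs. P \<delta> xs \<longrightarrow> Q \<epsilon> xs) \<Longrightarrow>
   \<exists>\<epsilon>>0. \<forall>\<delta>>0. \<exists>xs. P \<delta> xs \<and> \<not> Q \<epsilon> xs"
  by blast

theorem lemma2p1:
  fixes X S :: "'a::metric_space set" and f :: "'a \<Rightarrow> 'a"
  assumes "compact X"
    and "continuous_on X f" and "f ` X \<subseteq> X"
    and "compact S" and "S \<subseteq> X" and "f ` S \<subseteq> S"
    and "chain_recurrent_set S f = S"
    and "limit_shadowing_around X f S"
  shows "shadowing_around X f S"
proof (rule ccontr)
  assume ns: "\<not> shadowing_around X f S"
  have "\<exists>\<epsilon>>0. \<forall>\<delta>>0. \<exists>xs. (pseudo_orbit f \<delta> xs \<and> range xs \<subseteq> S) \<and>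
      \<not> (\<exists>x\<in>X. \<forall>i. dist (xs i) ((f ^^ i) x) \<le> \<epsilon>)"
    using ns unfolding shadowing_around_def
    by (rule negshadow[of "\<lambda>\<delta> xs. pseudo_orbit f \<delta> xs \<and> range xs \<subseteq> S"
                          "\<lambda>\<epsilon> xs. \<exists>x\<in>X. \<forall>i. dist (xs i) ((f ^^ i) x) \<le> \<epsilon>"])
  then obtain \<epsilon> where \<epsilon>: "\<epsilon> > 0" "\<forall>\<delta>>0. \<exists>xs. (pseudo_orbit f \<delta> xs \<and> range xs \<subseteq> S) \<and>
      \<not> (\<exists>x\<in>X. \<forall>i. dist (xs i) ((f ^^ i) x) \<le> \<epsilon>)"
    by (elim exE conjE)
  have CR: "\<forall>x\<in>S. \<forall>\<delta>>0. reach S f \<delta> x x"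
  proof (intro ballI allI impI)
    fix x :: 'a and \<delta> :: real assume "x \<in> S" "\<delta> > 0"
    then have "x \<in> chain_recurrent_set S f" using assms(7) by blast
    then have H0: "\<forall>\<delta>>0. \<exists>k\<ge>1. \<exists>c::nat \<Rightarrow> 'a.
      (\<forall>i\<le>k. c i \<in> S) \<and> c 0 = x \<and> c k = x \<and> (\<forall>i<k. dist (f (c i)) (c (Suc i)) \<le> \<delta>)"
      unfolding chain_recurrent_set_def mem_Collect_eq by (rule conjunct2)
    have H: "\<exists>k\<ge>1. \<exists>c::nat \<Rightarrow> 'a.
      (\<forall>i\<le>k. c i \<in> S) \<and> c 0 = x \<and> c k = x \<and> (\<forall>i<k. dist (f (c i)) (c (Suc i)) \<le> \<delta>)"
      by (rule H0[rule_format, OF \<open>\<delta> > 0\<close>])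
    then show "reach S f \<delta> x x" unfolding reach_def .
  qed
  have contS: "continuous_on S f" by (rule continuous_on_subset[OF assms(2,5)])
  define w where "w n = inverse (real (Suc n))" for n
  have wpos: "w n > 0" for n by (simp add: w_def)
  have wmono: "w q \<le> w n" if "n \<le> q" for n q
    using that by (simp add: w_def field_simps)
  have "\<forall>n. \<exists>\<eta>>0. \<eta> \<le> w n \<and> (\<forall>x y. reach S f \<eta> x y \<longrightarrow> reach S f (w n) y x)"
    using sym_reach[OF assms(4) contS CR wpos] by (intro allI)
  then obtain \<eta> where \<eta>: "\<And>n. \<eta> n > 0" "\<And>n. \<eta> n \<le> w n"
    "\<And>n x y. reach S f (\<eta> n) x y \<Longrightarrow> reach S f (w n) y x"
    by metis
  have "\<forall>n. \<exists>xs. (pseudo_orbit f (\<eta> n) xs \<and> range xs \<subseteq> S) \<and>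
      \<not> (\<exists>x\<in>X. \<forall>i. dist (xs i) ((f ^^ i) x) \<le> \<epsilon>)"
    using \<epsilon>(2) \<eta>(1) by (intro allI) (rule \<epsilon>(2)[rule_format, OF \<eta>(1)])
  then obtain \<xi> where \<xi>0: "\<forall>n. (pseudo_orbit f (\<eta> n) (\<xi> n) \<and> range (\<xi> n) \<subseteq> S) \<and>
      \<not> (\<exists>x\<in>X. \<forall>i. dist (\<xi> n i) ((f ^^ i) x) \<le> \<epsilon>)"
    by (rule choice[THEN exE])
  have \<xi>: "\<And>n. pseudo_orbit f (\<eta> n) (\<xi> n)" "\<And>n. range (\<xi> n) \<subseteq> S"
    "\<And>n. \<not> (\<exists>x\<in>X. \<forall>i. dist (\<xi> n i) ((f ^^ i) x) \<le> \<epsilon>)"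
    using \<xi>0 by simp_all
  have "\<exists>N. N \<ge> 1 \<and> (\<forall>x\<in>X. \<exists>i<N. dist (\<xi> n i) ((f ^^ i) x) > \<epsilon>)" for n
  proof -
    have "\<forall>x\<in>X. \<exists>i. dist (\<xi> n i) ((f ^^ i) x) > \<epsilon>" using \<xi>(3)[of n] by (meson not_le)
    then obtain N where "\<forall>x\<in>X. \<exists>i<N. dist (\<xi> n i) ((f ^^ i) x) > \<epsilon>"
      using finite_bad[OF assms(1,2,3)] by blast
    then show ?thesis by (intro exI[of _ "Suc N"]) (auto intro: less_SucI)
  qed
  then obtain N where N: "\<And>n. N n \<ge> 1" "\<And>n x. x \<in> X \<Longrightarrow> \<exists>i<N n. dist (\<xi> n i) ((f ^^ i) x) > \<epsilon>"
    by metis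
  have R: "reach S f (w n) (\<xi> n (N n)) (\<xi> n 0)" for n
  proof -
    have "reach S f (\<eta> n) (\<xi> n 0) (\<xi> n (N n))"
      unfolding reach_def
    proof (intro exI[of _ "N n"] conjI exI[of _ "\<xi> n"] allI impI)
      show "1 \<le> N n" by (rule N(1))
      show "\<xi> n i \<in> S" for i using \<xi>(2)[of n] by (simp add: image_subset_iff)
      show "dist (f (\<xi> n i)) (\<xi> n (Suc i)) \<le> \<eta> n" for i
        using \<xi>(1)[of n] unfolding pseudo_orbit_def by simp
    qed (rule refl)+
    then show ?thesis by (rule \<eta>(3))
  qed
  obtain m c where mc: "\<And>n. m n \<ge> 1" "\<And>n i. i \<le> m n \<Longrightarrow> c n i \<in> S"
    "\<And>n. c n 0 = \<xi> n (N n)" "\<And>n. c n (m n) = \<xi> n 0"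
    "\<And>n i. i < m n \<Longrightarrow> dist (f (c n i)) (c n (Suc i)) \<le> w n"
    by (rule choose_chains[of S f w "\<lambda>n. \<xi> n (N n)" "\<lambda>n. \<xi> n 0", OF R], rule that)
  have "\<forall>n. \<xi> n 0 \<in> S" using \<xi>(2) by blast
  then obtain a r where ar: "a \<in> S" "strict_mono r" "((\<lambda>n. \<xi> n 0) \<circ> r) \<longlonglongrightarrow> a"
    using seq_compactE[OF compact_imp_seq_compact[OF assms(4)]] by metis
  define p where "p n = \<xi> (r n) 0" for n
  have plim: "p \<longlonglongrightarrow> a" using ar(3) unfolding p_def[abs_def] by (simp add: comp_def)
  have pd: "(\<lambda>n. dist (p n) (p (Suc n))) \<longlonglongrightarrow> 0"
    using tendsto_dist[OF plim LIMSEQ_Suc[OF plim]] by simp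
  define G where "G n j = (if j < N (r n) then \<xi> (r n) j else c (r n) (j - N (r n)))" for n j
  define len where "len n = N (r n) + m (r n)" for n
  define e where "e n = w n + dist (p n) (p (Suc n))" for n
  have e0: "e \<longlonglongrightarrow> 0"
    unfolding e_def w_def using tendsto_add[OF LIMSEQ_inverse_real_of_nat pd] by simp
  have len1: "\<forall>n. len n \<ge> 1" using mc(1) by (simp add: len_def add_increasing)
  have Gin: "\<forall>n j. j < len n \<longrightarrow> G n j \<in> S"
    using \<xi>(2) mc(2) by (auto simp: G_def len_def)
  have Gstep: "dist (f (G n j)) (G n (Suc j)) \<le> w n" if "j < len n" for n j
  proof -
    define q where "q = r n"
    have wq: "w q \<le> w n" using seq_suble[OF ar(2)] by (simp add: q_def wmono)
    have po: "dist (f (\<xi> q i)) (\<xi> q (Suc i)) \<le> w q" for i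
      using \<xi>(1)[of q] \<eta>(2)[of q] unfolding pseudo_orbit_def by (meson order_trans)
    consider "Suc j < N q" | "Suc j = N q" | "N q \<le> j" by linarith
    then have "dist (f (G n j)) (G n (Suc j)) \<le> w q"
    proof cases
      case 1 then show ?thesis using po by (simp add: G_def q_def[symmetric])
    next
      case 2 then show ?thesis using po[of j] mc(3)[of q] by (simp add: G_def q_def[symmetric])
    next
      case 3
      then have "j - N q < m q" using that by (simp add: len_def q_def)
      moreover have "Suc j - N q = Suc (j - N q)" using 3 by simp
      ultimately show ?thesis using 3 mc(5)[of "j - N q" q] by (simp add: G_def q_def[symmetric])
    qed
    then show ?thesis using wq by simp
  qed
  have Gend: "G n (len n) = p n" for n
    using mc(4) by (simp add: G_def len_def p_def)
  have G0: "G n 0 = p n" for n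
    using N(1)[of "r n"] by (simp add: G_def p_def)
  have jump: "\<forall>n j. j < len n \<longrightarrow>
       dist (f (G n j)) (if Suc j < len n then G n (Suc j) else G (Suc n) 0) \<le> e n"
  proof (intro allI impI)
    fix n j assume j: "j < len n"
    show "dist (f (G n j)) (if Suc j < len n then G n (Suc j) else G (Suc n) 0) \<le> e n"
    proof (cases "Suc j < len n")
      case True
      have "dist (f (G n j)) (G n (Suc j)) \<le> e n"
        using Gstep[OF j] zero_le_dist[of "p n" "p (Suc n)"] unfolding e_def by linarith
      then show ?thesis using True by simp
    next
      case False
      then have "Suc j = len n" using j by simp
      then have "G n (Suc j) = p n" using Gend by simp
      have "dist (f (G n j)) (p (Suc n)) \<le> dist (f (G n j)) (p n) + dist (p n) (p (Suc n))"
        by (rule dist_triangle)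
      also have "\<dots> \<le> e n" using Gstep[OF j] \<open>G n (Suc j) = p n\<close> by (simp add: e_def)
      finally show ?thesis using False G0 by simp
    qed
  qed
  obtain Z where Z: "range Z \<subseteq> S" "limit_pseudo_orbit f Z"
    "\<forall>T0. \<exists>n t. T0 \<le> t \<and> (\<forall>j<len n. Z (t + j) = G n j)"
    using concat_blocks[OF len1 e0 jump Gin] by blast
  obtain y where y: "y \<in> X" "(\<lambda>i. dist (Z i) ((f ^^ i) y)) \<longlonglongrightarrow> 0"
    using assms(8) Z(1,2) unfolding limit_shadowing_around_def by blast
  have "\<forall>\<^sub>F i in sequentially. dist (Z i) ((f ^^ i) y) < \<epsilon>"
    using order_tendstoD(2)[OF y(2) \<epsilon>(1)] .
  then obtain T0 where T0: "\<And>i. i \<ge> T0 \<Longrightarrow> dist (Z i) ((f ^^ i) y) < \<epsilon>"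
    unfolding eventually_sequentially by blast
  obtain n t where nt: "T0 \<le> t" "\<And>j. j < len n \<Longrightarrow> Z (t + j) = G n j" using Z(3) by blast
  have xX: "(f ^^ t) y \<in> X" using funpow_cont[OF assms(2,3), of t] y(1) by blast
  obtain i where i: "i < N (r n)" "dist (\<xi> (r n) i) ((f ^^ i) ((f ^^ t) y)) > \<epsilon>"
    using N(2)[OF xX] by blast
  have "i < len n" using i(1) by (simp add: len_def)
  then have "Z (t + i) = \<xi> (r n) i" using nt(2) i(1) by (simp add: G_def)
  moreover have "(f ^^ i) ((f ^^ t) y) = (f ^^ (t + i)) y"
    by (simp add: funpow_add add.commute[of t i])
  moreover have "dist (Z (t + i)) ((f ^^ (t + i)) y) < \<epsilon>" using T0 nt(1) by simp
  ultimately show False using i(2) by simp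
qed


end
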